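(* For every positive integer $l$, the set of all positive eigenvalues of the adjacency matrix of the double subdivided star $T_{l,l}$, with any one of them removed, is linearly independent over $\mathbb{Q}$.
   Context: A subdivided star $SK_{1,l}$ is obtained by identifying exactly one pendant (end) vertex from each of $l$ copies of the path $P_3$; the identified vertex is the coalescence vertex. The double subdivided star $T_{l,m}$ is obtained from $SK_{1,l}$ and $SK_{1,m}$ by adding one edge joining their two coalescence vertices. *)

theory Defs
  imports "Jordan_Normal_Form.Char_Poly"
begin

text \<open>Double subdivided star T_{l,m} on vertex set {0..<2+2l+2m}:
  0 = coalescence vertex of SK_{1,l}, 1 = coalescence vertex of SK_{1,m};
  for i < l: paths 0 - (2+i) - (2+l+i);
  for j < m: paths 1 - (2+2l+j) - (2+2l+m+j);
  plus the edge 0 - 1.\<close>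

definition dss_edge0 :: "nat \<Rightarrow> nat \<Rightarrow> nat \<Rightarrow> nat \<Rightarrow> bool" where
  "dss_edge0 l m u v \<longleftrightarrow>
     (u = 0 \<and> v = 1)
   \<or> (\<exists>i<l. (u = 0 \<and> v = 2 + i) \<or> (u = 2 + i \<and> v = 2 + l + i))
   \<or> (\<exists>j<m. (u = 1 \<and> v = 2 + 2*l + j) \<or> (u = 2 + 2*l + j \<and> v = 2 + 2*l + m + j))"

definition dss_adj :: "nat \<Rightarrow> nat \<Rightarrow> nat \<Rightarrow> nat \<Rightarrow> bool" where
  "dss_adj l m u v \<longleftrightarrow> dss_edge0 l m u v \<or> dss_edge0 l m v u"

definition dss_adj_mat :: "nat \<Rightarrow> nat \<Rightarrow> real mat" where
  "dss_adj_mat l m = mat (2 + 2*l + 2*m) (2 + 2*l + 2*m)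
     (\<lambda>(u, v). if dss_adj l m u v then 1 else 0)"

definition rat_lin_indep :: "real set \<Rightarrow> bool" where
  "rat_lin_indep S \<longleftrightarrow> (\<forall>T c. T \<subseteq> S \<longrightarrow> finite T \<longrightarrow>
      (\<Sum>x\<in>T. of_rat (c x) * x) = 0 \<longrightarrow> (\<forall>x\<in>T. c x = 0))"

end

theory Submission
  imports Defs
begin

lemma dim_adj[simp]: "dim_row (dss_adj_mat l m) = 2 + 2*l + 2*m" "dim_col (dss_adj_mat l m) = 2 + 2*l + 2*m"
  by (auto simp: dss_adj_mat_def)

lemma mulvec_comp:
  assumes "N = 2 + 2*l + 2*l" "v \<in> carrier_vec N" "u < N"
  shows "(dss_adj_mat l l *\<^sub>v v) $ u = (\<Sum>w\<in>{w. w < N \<and> dss_adj l l u w}. v $ w)"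
proof -
  have "(dss_adj_mat l l *\<^sub>v v) $ u = row (dss_adj_mat l l) u \<bullet> v"
    using assms by simp
  also have "\<dots> = (\<Sum>w\<in>{0..<dim_vec v}. row (dss_adj_mat l l) u $ w * v $ w)"
    by (simp only: scalar_prod_def)
  also have "\<dots> = (\<Sum>w\<in>{0..<N}. (if dss_adj l l u w then v $ w else 0))"
    by (rule sum.cong) (use assms in \<open>auto simp: dss_adj_mat_def\<close>)
  also have "\<dots> = (\<Sum>w\<in>{w\<in>{0..<N}. dss_adj l l u w}. v $ w)"
    by (simp only: sum.inter_filter[symmetric] finite_atLeastLessThan)
  also have "{w\<in>{0..<N}. dss_adj l l u w} = {w. w < N \<and> dss_adj l l u w}" by auto
  finally show ?thesis .
qed

lemma N0: "{w. w < 2 + 2*l + 2*l \<and> dss_adj l l 0 w} = insert 1 {2..<2+l}"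
  by (auto simp: dss_adj_def dss_edge0_def; presburger)
lemma N1: "{w. w < 2 + 2*l + 2*l \<and> dss_adj l l 1 w} = insert 0 {2+2*l..<2+3*l}"
  by (auto simp: dss_adj_def dss_edge0_def; presburger)
lemma N2: "i < l \<Longrightarrow> {w. w < 2 + 2*l + 2*l \<and> dss_adj l l (2+i) w} = {0, 2+l+i}"
  by (auto simp: dss_adj_def dss_edge0_def)
lemma N3: "i < l \<Longrightarrow> {w. w < 2 + 2*l + 2*l \<and> dss_adj l l (2+l+i) w} = {2+i}"
  by (auto simp: dss_adj_def dss_edge0_def)
lemma N4: "i < l \<Longrightarrow> {w. w < 2 + 2*l + 2*l \<and> dss_adj l l (2+2*l+i) w} = {1, 2+3*l+i}"
  by (auto simp: dss_adj_def dss_edge0_def)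
lemma N5: "i < l \<Longrightarrow> {w. w < 2 + 2*l + 2*l \<and> dss_adj l l (2+3*l+i) w} = {2+2*l+i}"
  by (auto simp: dss_adj_def dss_edge0_def)

definition pp :: "nat \<Rightarrow> real \<Rightarrow> real" where
  "pp l x = x^3 - x^2 - (real l + 1) * x + 1"

lemma no_rat_root_int:
  fixes a b :: int
  assumes l: "l \<ge> 1" and b: "b > 0" and cop: "coprime a b"
    and eq: "a^3 - a^2*b - (int l + 1)*a*b^2 + b^3 = 0"
  shows False
proof -
  have "b dvd a^3"
  proof -
    have "a^3 - b * (a^2 + (int l + 1)*a*b - b^2) = a^3 - a^2*b - (int l + 1)*a*b^2 + b^3"
      by (simp add: algebra_simps power2_eq_square power3_eq_cube)
    hence "a^3 = b * (a^2 + (int l + 1)*a*b - b^2)" using eq by linarith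
    then show ?thesis by (metis dvd_triv_left)
  qed
  moreover have "coprime b (a^3)" using cop by (simp add: coprime_commute)
  ultimately have "is_unit b" using coprime_common_divisor[of b "a^3" b] by simp
  hence "\<bar>b\<bar> = 1" by (simp only: zdvd1_eq)
  hence b1: "b = 1" using b by linarith
  have "a dvd b^3"
  proof -
    have "b^3 - a * (-(a^2) + a*b + (int l + 1)*b^2) = a^3 - a^2*b - (int l + 1)*a*b^2 + b^3"
      by (simp add: algebra_simps power2_eq_square power3_eq_cube)
    hence "b^3 = a * (-(a^2) + a*b + (int l + 1)*b^2)" using eq by linarith
    then show ?thesis by (metis dvd_triv_left)
  qed
  hence "a dvd 1" using b1 by simp
  hence "\<bar>a\<bar> = 1" by (simp only: zdvd1_eq)
  hence "a = 1 \<or> a = -1" by linarith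
  then show False
  proof
    assume "a = 1" then show False using eq b1 l by simp
  next
    assume "a = -1" then show False using eq b1 l by simp
  qed
qed

lemma no_rat_root:
  assumes l: "l \<ge> 1"
  shows "pp l (of_rat q) \<noteq> 0"
proof
  assume h: "pp l (of_rat q) = 0"
  obtain a b where qd: "quotient_of q = (a, b)" by (cases "quotient_of q")
  have b: "b > 0" using quotient_of_denom_pos[OF qd] .
  have cop: "coprime a b" using quotient_of_coprime[OF qd] .
  have qab: "q = of_int a / of_int b" using quotient_of_div[OF qd] .
  have "real_of_rat q = real_of_int a / real_of_int b" using qab by (simp add: of_rat_divide)
  define x where "x = real_of_rat q"
  have ax: "real_of_int a = x * real_of_int b" using \<open>real_of_rat q = _\<close> b unfolding x_def by simp
  have "real_of_int a^3 - real_of_int a^2 * real_of_int b - (real l + 1) * real_of_int a * real_of_int b^2 + real_of_int b^3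
     = real_of_int b^3 * pp l x"
    unfolding ax pp_def by (simp add: algebra_simps power2_eq_square power3_eq_cube)
  hence "real_of_int a^3 - real_of_int a^2 * real_of_int b - (real l + 1) * real_of_int a * real_of_int b^2 + real_of_int b^3 = 0"
    using h unfolding x_def by simp
  hence "real_of_int (a^3 - a^2*b - (int l + 1)*a*b^2 + b^3) = 0" by simp
  hence "a^3 - a^2*b - (int l + 1)*a*b^2 + b^3 = 0" by (simp only: of_int_eq_0_iff)
  then show False using no_rat_root_int[OF l b cop] by blast
qed

lemma irr: assumes "l \<ge> 1" "pp l r = 0" shows "r \<noteq> of_rat q"
  using no_rat_root[OF assms(1), of q] assms(2) by auto

lemma K:
  assumes l: "l \<ge> 1" and r: "pp l r = 0"
    and eq: "of_rat A + of_rat B * r + of_rat C * r^2 = 0"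
  shows "A = 0 \<and> B = 0 \<and> C = 0"
proof (cases "C = 0")
  case True
  show ?thesis
  proof (cases "B = 0")
    case True
    with \<open>C = 0\<close> eq show ?thesis by simp
  next
    case False
    have "r = of_rat (- A / B)" using eq \<open>C = 0\<close> False
      by (simp add: of_rat_divide of_rat_minus field_simps)
    with irr[OF l r] show ?thesis by blast
  qed
next
  case False
  define a where "a = A / C"
  define b where "b = B / C"
  define x :: real where "x = of_rat a"
  define y :: real where "y = of_rat b"
  have Cn: "(of_rat C :: real) \<noteq> 0" using False by simp
  have Ax: "of_rat A = x * of_rat C" unfolding x_def a_def using False by (simp add: of_rat_divide)
  have By: "of_rat B = y * of_rat C" unfolding y_def b_def using False by (simp add: of_rat_divide)
  have "of_rat C * (x + y * r + r^2) = 0" using eq unfolding Ax By by (simp add: algebra_simps)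
  hence "x + y * r + r^2 = 0" using Cn by simp
  hence r2: "r^2 = - y * r - x" by linarith
  have z: "r^2 + y*r + x = 0" using r2 by simp
  have "pp l r - ((y^2 - x + y - real l - 1) * r + (x*y + x + 1)) = (r - y - 1) * (r^2 + y*r + x)"
    unfolding pp_def by (simp add: algebra_simps power2_eq_square power3_eq_cube)
  hence lin0: "(y^2 - x + y - real l - 1) * r + (x*y + x + 1) = 0" using r z by simp
  have lin: "of_rat (b^2 - a + b - of_nat l - 1) * r + of_rat (a*b + a + 1) = 0"
    using lin0 unfolding x_def y_def by (simp add: of_rat_add of_rat_diff of_rat_mult of_rat_power)
  have k1: "b^2 - a + b - of_nat l - 1 = 0"
  proof (rule ccontr)
    assume ne: "b^2 - a + b - of_nat l - 1 \<noteq> 0"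
    define k1 where "k1 = b^2 - a + b - of_nat l - 1"
    define k0 where "k0 = a*b + a + 1"
    have lin': "of_rat k1 * r + of_rat k0 = 0" using lin unfolding k1_def k0_def .
    have nz: "(of_rat k1 :: real) \<noteq> 0" using ne unfolding k1_def by simp
    have "r = - of_rat k0 / of_rat k1" using lin' nz by (simp add: field_simps)
    hence "r = of_rat (- k0 / k1)" by (simp add: of_rat_divide of_rat_minus)
    with irr[OF l r] show False by blast
  qed
  with lin have k0: "a*b + a + 1 = 0" by simp
  have k1r: "y^2 - x + y - real l - 1 = 0"
  proof -
    have "of_rat (b^2 - a + b - of_nat l - 1) = (0::real)" using k1 by simp
    moreover have "(of_rat (b^2 - a + b - of_nat l - 1) :: real) = y^2 - x + y - real l - 1"
      unfolding x_def y_def by (simp add: of_rat_add of_rat_diff of_rat_power)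
    ultimately show ?thesis by simp
  qed
  have k0r: "x*y + x + 1 = 0"
  proof -
    have "of_rat (a*b + a + 1) = (0::real)" using k0 by simp
    moreover have "(of_rat (a*b + a + 1) :: real) = x*y + x + 1"
      unfolding x_def y_def by (simp add: of_rat_add of_rat_mult)
    ultimately show ?thesis by simp
  qed
  have e1: "pp l (of_rat (1 + b)) = pp l (1 + y)" unfolding y_def by (simp add: of_rat_add)
  have "pp l (1 + y) = (1+y) * (y^2 - x + y - real l - 1) + (x*y + x + 1)"
    unfolding pp_def by (simp add: algebra_simps power2_eq_square power3_eq_cube)
  also have "\<dots> = 0" using k1r k0r by simp
  finally show ?thesis using no_rat_root[OF l, of "1+b"] e1 by simp
qed


lemma Qpair:
  assumes "pp l a = 0" "pp l b = 0" "a \<noteq> b"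
  shows "a^2 + a*b + b^2 - a - b - (real l + 1) = 0"
proof -
  have "pp l a - pp l b = (a - b) * (a^2 + a*b + b^2 - a - b - (real l + 1))"
    unfolding pp_def by (simp add: algebra_simps power2_eq_square power3_eq_cube)
  then have "(a - b) * (a^2 + a*b + b^2 - a - b - (real l + 1)) = 0" using assms by simp
  then show ?thesis using assms(3) by simp
qed

lemma sum3:
  assumes "pp l a = 0" "pp l b = 0" "pp l z = 0" "a \<noteq> b" "a \<noteq> z" "b \<noteq> z"
  shows "a + b + z = 1"
proof -
  have 1: "a^2 + a*b + b^2 - a - b - (real l + 1) = 0" using Qpair assms by blast
  have 2: "a^2 + a*z + z^2 - a - z - (real l + 1) = 0" using Qpair assms by blast
  have "(a^2 + a*b + b^2 - a - b - (real l + 1)) - (a^2 + a*z + z^2 - a - z - (real l + 1)) = (b - z) * (a + b + z - 1)"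
    by (simp add: algebra_simps power2_eq_square)
  then have "(b - z) * (a + b + z - 1) = 0" using 1 2 by simp
  then show ?thesis using assms(6) by simp
qed

lemma L:
  assumes l: "l \<ge> 1" and r: "pp l r = 0" and t: "pp l t = 0" and rt: "r \<noteq> t"
    and eq: "of_rat A + of_rat B * r + of_rat C * t = 0"
  shows "A = 0 \<and> B = 0 \<and> C = 0"
proof (cases "C = 0")
  case True
  have "of_rat A + of_rat B * r + of_rat 0 * r^2 = 0" using eq True by simp
  from K[OF l r this] True show ?thesis by simp
next
  case False
  define \<alpha> where "\<alpha> = - A / C"
  define \<beta> where "\<beta> = - B / C"
  define xa :: real where "xa = of_rat \<alpha>"
  define xb :: real where "xb = of_rat \<beta>"
  have Cn: "(of_rat C :: real) \<noteq> 0" using False by simp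
  have Ax: "of_rat A = - xa * of_rat C" unfolding xa_def \<alpha>_def using False by (simp add: of_rat_divide of_rat_minus)
  have By: "of_rat B = - xb * of_rat C" unfolding xb_def \<beta>_def using False by (simp add: of_rat_divide of_rat_minus)
  have "of_rat C * (t - xa - xb * r) = 0" using eq unfolding Ax By by (simp add: algebra_simps)
  hence "t - xa - xb * r = 0" using Cn by simp
  hence tt: "t = xa + xb * r" by linarith
  define c2 where "c2 = 3*\<alpha>*\<beta>^2 - \<beta>^2 + \<beta>^3"
  define c1 where "c1 = 3*\<alpha>^2*\<beta> - 2*\<alpha>*\<beta> - (of_nat l + 1)*\<beta> + (of_nat l + 1)*\<beta>^3"
  define c0 where "c0 = \<alpha>^3 - \<alpha>^2 - (of_nat l + 1)*\<alpha> + 1 - \<beta>^3"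
  have "pp l (xa + xb * r) - xb^3 * pp l r =
        (3*xa*xb^2 - xb^2 + xb^3) * r^2 + (3*xa^2*xb - 2*xa*xb - (real l + 1)*xb + (real l + 1)*xb^3) * r
        + (xa^3 - xa^2 - (real l + 1)*xa + 1 - xb^3)"
    unfolding pp_def by (simp add: algebra_simps power2_eq_square power3_eq_cube)
  also have "\<dots> = of_rat c2 * r^2 + of_rat c1 * r + of_rat c0"
    unfolding c2_def c1_def c0_def xa_def xb_def
    by (simp add: of_rat_add of_rat_diff of_rat_mult of_rat_power)
  finally have "of_rat c0 + of_rat c1 * r + of_rat c2 * r^2 = 0"
    using r t tt by simp
  from K[OF l r this] have z: "c0 = 0" "c1 = 0" "c2 = 0" by auto
  show ?thesis
  proof (cases "\<beta> = 0")
    case True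
    then have "t = of_rat \<alpha>" using tt unfolding xa_def xb_def by simp
    with irr[OF l t] show ?thesis by blast
  next
    case bnz: False
    have "\<beta>^2 * (3*\<alpha> - 1 + \<beta>) = 0" using z(3) unfolding c2_def by (simp add: algebra_simps power2_eq_square power3_eq_cube)
    hence h: "3*\<alpha> = 1 - \<beta>" using bnz by simp
    have "\<beta> * (3*\<alpha>^2 - 2*\<alpha> - (of_nat l + 1) + (of_nat l + 1)*\<beta>^2) = 0"
      using z(2) unfolding c1_def by (simp add: algebra_simps power2_eq_square power3_eq_cube)
    hence e: "3*\<alpha>^2 - 2*\<alpha> - (of_nat l + 1) + (of_nat l + 1)*\<beta>^2 = 0" using bnz by simp
    have "(3*\<alpha>)^2 - 2*(3*\<alpha>) - 3*(of_nat l + 1)*(1-\<beta>^2) = 3 * (3*\<alpha>^2 - 2*\<alpha> - (of_nat l + 1) + (of_nat l + 1)*\<beta>^2)"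
      by (simp add: algebra_simps power2_eq_square)
    hence "(3*\<alpha>)^2 - 2*(3*\<alpha>) - 3*(of_nat l + 1)*(1-\<beta>^2) = 0" using e by simp
    hence "(1-\<beta>)^2 - 2*(1-\<beta>) - 3*(of_nat l + 1)*(1-\<beta>^2) = 0" unfolding h .
    moreover have "(1-\<beta>)^2 - 2*(1-\<beta>) - 3*(of_nat l + 1)*(1-\<beta>^2) = - ((1-\<beta>)*(1+\<beta>)*(3*of_nat l + 4))"
      by (simp add: algebra_simps power2_eq_square)
    ultimately have "(1-\<beta>)*(1+\<beta>)*(3*of_nat l + 4) = 0" by simp
    moreover have "(3*of_nat l + 4 :: rat) \<noteq> 0"
    proof -
      have "(3*of_nat l + 4 :: rat) = of_nat (3*l+4)" by simp
      also have "\<dots> \<noteq> 0" by (simp only: of_nat_eq_0_iff)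
      finally show ?thesis .
    qed
    ultimately have "\<beta> = 1 \<or> \<beta> = -1" by auto
    then show ?thesis
    proof
      assume b1: "\<beta> = 1"
      then have "\<alpha> = 0" using h by simp
      then have "t = r" using tt b1 unfolding xa_def xb_def by simp
      with rt show ?thesis by simp
    next
      assume b1: "\<beta> = -1"
      then have a: "\<alpha> = 2/3" using h by simp
      have "c0 = 50/27 - 2/3 * (of_nat l + 1)" unfolding c0_def a b1 by (simp add: power3_eq_cube power2_eq_square algebra_simps)
      with z(1) have "50/27 - 2/3 * (of_nat l + 1) = (0::rat)" by simp
      hence "of_nat (18 * l) = (32::rat)" by (simp add: algebra_simps)
      hence "18 * l = 32" by (metis of_nat_eq_iff of_nat_numeral)
      then show ?thesis by presburger
    qed
  qed
qed

lemma idx_cases: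
  fixes u l :: nat
  assumes "u < 2 + 2*l + 2*l"
  shows "u = 0 \<or> u = 1 \<or> (\<exists>i<l. u = 2+i) \<or> (\<exists>i<l. u = 2+l+i) \<or> (\<exists>i<l. u = 2+2*l+i) \<or> (\<exists>i<l. u = 2+3*l+i)"
proof -
  consider "u = 0" | "u = 1" | "2 \<le> u \<and> u < 2+l" | "2+l \<le> u \<and> u < 2+2*l" | "2+2*l \<le> u \<and> u < 2+3*l" | "2+3*l \<le> u \<and> u < 2+4*l"
    using assms by linarith
  then show ?thesis
  proof cases
    case 3 then have "u - 2 < l \<and> u = 2 + (u - 2)" by auto then show ?thesis by blast
  next
    case 4 then have "u - 2 - l < l \<and> u = 2 + l + (u - 2 - l)" by auto then show ?thesis by blast
  next
    case 5 then have "u - 2 - 2*l < l \<and> u = 2 + 2*l + (u - 2 - 2*l)" by auto then show ?thesis by blast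
  next
    case 6 then have "u - 2 - 3*l < l \<and> u = 2 + 3*l + (u - 2 - 3*l)" by auto then show ?thesis by blast
  qed auto
qed

lemma sum_block:
  assumes "\<And>i. i < l \<Longrightarrow> f (k + i) = (c::real)"
  shows "(\<Sum>w\<in>{k..<k+l}. f w) = real l * c"
proof -
  have "(\<Sum>w\<in>{k..<k+l}. f w) = (\<Sum>w\<in>{k..<k+l}. c)"
  proof (rule sum.cong)
    fix w assume "w \<in> {k..<k+l}"
    then have "w - k < l" "w = k + (w - k)" by auto
    then show "f w = c" using assms by metis
  qed simp
  then show ?thesis by simp
qed

lemma eig_char:
  assumes ev: "eigenvalue (dss_adj_mat l l) k" and lpos: "k > 0"
  shows "k = 1 \<or> pp l k = 0 \<or> pp l (-k) = 0"
proof (rule ccontr)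
  assume nc: "\<not> ?thesis"
  then have l1: "k \<noteq> 1" and np: "pp l k \<noteq> 0" and nq: "pp l (-k) \<noteq> 0" by auto
  define N where "N = 2 + 2*l + 2*l"
  obtain v where v: "v \<in> carrier_vec N" "v \<noteq> 0\<^sub>v N" "dss_adj_mat l l *\<^sub>v v = k \<cdot>\<^sub>v v"
    using ev unfolding eigenvalue_def eigenvector_def N_def by auto
  have dv: "dim_vec v = N" using v(1) by simp
  have comp: "(\<Sum>w\<in>{w. w < 2 + 2*l + 2*l \<and> dss_adj l l u w}. v$w) = k * v$u" if u: "u < N" for u
  proof -
    have "(dss_adj_mat l l *\<^sub>v v) $ u = (k \<cdot>\<^sub>v v) $ u" using v(3) by simp
    also have "\<dots> = k * v$u" using u dv by simp
    finally show ?thesis using mulvec_comp[OF N_def v(1) u] unfolding N_def by simp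
  qed
  have E0: "v$1 + (\<Sum>w\<in>{2..<2+l}. v$w) = k * v$0"
    using comp[of 0] unfolding N0 N_def by simp
  have E1: "v$0 + (\<Sum>w\<in>{2+2*l..<2+2*l+l}. v$w) = k * v$1"
    using comp[of 1] unfolding N1 N_def by (simp add: add.assoc)
  have E2: "v$0 + v$(2+l+i) = k * v$(2+i)" if "i < l" for i
    using comp[of "2+i"] that unfolding N2[OF that] N_def by simp
  have E3: "v$(2+i) = k * v$(2+l+i)" if "i < l" for i
    using comp[of "2+l+i"] that unfolding N3[OF that] N_def by simp
  have E4: "v$1 + v$(2+3*l+i) = k * v$(2+2*l+i)" if "i < l" for i
    using comp[of "2+2*l+i"] that unfolding N4[OF that] N_def by simp
  have E5: "v$(2+2*l+i) = k * v$(2+3*l+i)" if "i < l" for i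
    using comp[of "2+3*l+i"] that unfolding N5[OF that] N_def by simp
  define D where "D = k^2 - 1"
  have Dnz: "D \<noteq> 0"
  proof
    assume "D = 0"
    then have "(k - 1) * (k + 1) = 0" unfolding D_def by (simp add: algebra_simps power2_eq_square)
    then show False using l1 lpos by simp
  qed
  have Z: "D * v$(2+l+i) = v$0" if "i < l" for i
  proof -
    have "k * (k * v$(2+l+i)) = v$0 + v$(2+l+i)" using E2[OF that] E3[OF that] by simp
    then show ?thesis unfolding D_def by (simp add: algebra_simps power2_eq_square)
  qed
  have Y: "D * v$(2+i) = k * v$0" if "i < l" for i
    using E3[OF that] Z[OF that] by (metis mult.left_commute)
  have Z': "D * v$(2+3*l+i) = v$1" if "i < l" for i
  proof -
    have "k * (k * v$(2+3*l+i)) = v$1 + v$(2+3*l+i)" using E4[OF that] E5[OF that] by simp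
    then show ?thesis unfolding D_def by (simp add: algebra_simps power2_eq_square)
  qed
  have Y': "D * v$(2+2*l+i) = k * v$1" if "i < l" for i
    using E5[OF that] Z'[OF that] by (metis mult.left_commute)
  have S0: "D * (\<Sum>w\<in>{2..<2+l}. v$w) = real l * (k * v$0)"
    unfolding sum_distrib_left by (rule sum_block) (use Y in auto)
  have S1: "D * (\<Sum>w\<in>{2+2*l..<2+2*l+l}. v$w) = real l * (k * v$1)"
    unfolding sum_distrib_left by (rule sum_block) (use Y' in auto)
  define h where "h = k^3 - (real l + 1) * k"
  have H0: "h * v$0 = D * v$1"
  proof -
    have "D * (k * v$0) = D * v$1 + real l * (k * v$0)"
      using arg_cong[OF E0, of "\<lambda>x. D * x"] S0 by (simp add: algebra_simps)
    then show ?thesis unfolding h_def D_def by (simp add: algebra_simps power2_eq_square power3_eq_cube)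
  qed
  have H1: "h * v$1 = D * v$0"
  proof -
    have "D * (k * v$1) = D * v$0 + real l * (k * v$1)"
      using arg_cong[OF E1, of "\<lambda>x. D * x"] S1 by (simp add: algebra_simps)
    then show ?thesis unfolding h_def D_def by (simp add: algebra_simps power2_eq_square power3_eq_cube)
  qed
  have hmD: "h - D = pp l k" unfolding h_def D_def pp_def by (simp add: algebra_simps)
  have hpD: "h + D = - pp l (-k)" unfolding h_def D_def pp_def by (simp add: algebra_simps)
  have hD: "(h - D) * (h + D) \<noteq> 0" using hmD hpD np nq by simp
  show False
  proof (cases "v$0 = 0 \<and> v$1 = 0")
    case True
    have "v = 0\<^sub>v N"
    proof (rule eq_vecI)
      fix u assume "u < dim_vec (0\<^sub>v N)"
      then have u: "u < 2 + 2*l + 2*l" unfolding N_def by simp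
      from idx_cases[OF u] show "v $ u = 0\<^sub>v N $ u"
      proof (elim disjE exE conjE)
        fix i assume "i < l" "u = 2 + i"
        then show ?thesis using Y[of i] True Dnz N_def by simp
      next
        fix i assume "i < l" "u = 2 + l + i"
        then show ?thesis using Z[of i] True Dnz N_def by simp
      next
        fix i assume "i < l" "u = 2 + 2*l + i"
        then show ?thesis using Y'[of i] True Dnz N_def by simp
      next
        fix i assume "i < l" "u = 2 + 3*l + i"
        then show ?thesis using Z'[of i] True Dnz N_def by simp
      qed (use True N_def in auto)
    qed (simp add: dv)
    with v(2) show False by simp
  next
    case False
    have a: "(h - D) * (h + D) * v$0 = 0"
    proof -
      have "h * (h * v$0) = D * (D * v$0)" using H0 H1 by (metis mult.left_commute)
      then show ?thesis by (simp add: algebra_simps)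
    qed
    have b: "(h - D) * (h + D) * v$1 = 0"
    proof -
      have "h * (h * v$1) = D * (D * v$1)" using H0 H1 by (metis mult.left_commute)
      then show ?thesis by (simp add: algebra_simps)
    qed
    from False a b hD show False by simp
  qed
qed
lemma pp_cont: "continuous_on S (pp l)"
  unfolding pp_def by (intro continuous_intros)

theorem corollary2p3:
  fixes l :: nat and \<mu> :: real
  assumes "l \<ge> 1"
    and "\<mu> \<in> {x. eigenvalue (dss_adj_mat l l) x \<and> x > 0}"
  shows "rat_lin_indep ({x. eigenvalue (dss_adj_mat l l) x \<and> x > 0} - {\<mu>})"
proof -
  have l: "l \<ge> 1" by fact
  have p0: "pp l 0 = 1" unfolding pp_def by simp
  have p1: "pp l 1 = - real l" unfolding pp_def by simp
  have pm1: "pp l (-1) = real l" unfolding pp_def by simp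
  have pbig: "pp l (real l + 2) > 0"
  proof -
    have "pp l (real l + 2) = (real l + 2) * (real l + 1)^2 + 1"
      unfolding pp_def by (simp add: algebra_simps power2_eq_square power3_eq_cube)
    also have "\<dots> > 0" by (simp add: add_pos_nonneg)
    finally show ?thesis .
  qed
  have psmall: "pp l (-(real l + 2)) < 0"
  proof -
    have "pp l (-(real l + 2)) = 1 - (real l + 2) * ((real l + 2)^2 + 1)"
      unfolding pp_def by (simp add: algebra_simps power2_eq_square power3_eq_cube)
    also have "(real l + 2) * ((real l + 2)^2 + 1) \<ge> 2 * 1"
      by (rule mult_mono) (auto simp: add_nonneg_nonneg)
    ultimately show ?thesis by simp
  qed
  obtain r2 where r2: "0 \<le> r2" "r2 \<le> 1" "pp l r2 = 0"
    using IVT2'[of "pp l" 1 0 0] p0 p1 pp_cont by auto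
  obtain r3 where r3: "1 \<le> r3" "r3 \<le> real l + 2" "pp l r3 = 0"
    using IVT'[of "pp l" 1 0 "real l + 2"] pbig p1 pp_cont by auto
  obtain r1 where r1: "-(real l + 2) \<le> r1" "r1 \<le> 0" "pp l r1 = 0"
    using IVT'[of "pp l" "-(real l + 2)" 0 0] psmall p0 pp_cont by auto
  have r2': "0 < r2" "r2 < 1" using r2 p0 p1 l by (auto simp: order.order_iff_strict)
  have r3': "1 < r3" using r3 p1 l by (auto simp: order.order_iff_strict)
  have r1': "r1 < 0" using r1 p0 by (auto simp: order.order_iff_strict)
  have sum: "r1 + r2 + r3 = 1" using sum3[of l r1 r2 r3] r1 r2 r3 r1' r2' r3' by auto
  have roots: "x = r1 \<or> x = r2 \<or> x = r3" if "pp l x = 0" for x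
  proof (rule ccontr)
    assume "\<not> ?thesis"
    then have "x + r1 + r2 = 1" using sum3[of l x r1 r2] that r1 r2 r1' r2' by auto
    with sum \<open>\<not> ?thesis\<close> show False by auto
  qed
  define s where "s = - r1"
  have s_eq: "s = r2 + r3 - 1" unfolding s_def using sum by simp
  have ne: "1 \<noteq> r2" "1 \<noteq> r3" "r2 \<noteq> r3" "s \<noteq> 1" "s \<noteq> r2" "s \<noteq> r3"
  proof -
    show "1 \<noteq> r2" "1 \<noteq> r3" "r2 \<noteq> r3" using r2' r3' by auto
    show "s \<noteq> 1" using pm1 l r1 unfolding s_def by auto
    show "s \<noteq> r2" "s \<noteq> r3" using s_eq r2' r3' by auto
  qed
  define F where "F = {1, r2, r3, s}"
  have sub: "{x. eigenvalue (dss_adj_mat l l) x \<and> x > 0} \<subseteq> F"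
  proof
    fix x assume "x \<in> {x. eigenvalue (dss_adj_mat l l) x \<and> x > 0}"
    then have x: "eigenvalue (dss_adj_mat l l) x" "x > 0" by auto
    from eig_char[OF x] consider "x = 1" | "pp l x = 0" | "pp l (-x) = 0" by blast
    then show "x \<in> F"
    proof cases
      case 2 then have "x = r1 \<or> x = r2 \<or> x = r3" by (rule roots)
      then show ?thesis using x(2) r1' unfolding F_def by auto
    next
      case 3 then have "-x = r1 \<or> -x = r2 \<or> -x = r3" by (rule roots)
      then show ?thesis using x(2) r2' r3' unfolding F_def s_def by auto
    qed (auto simp: F_def)
  qed
  have muF: "\<mu> \<in> F" using assms(2) sub by blast
  show ?thesis
    unfolding rat_lin_indep_def
  proof (intro allI impI)
    fix T c
    assume T: "T \<subseteq> {x. eigenvalue (dss_adj_mat l l) x \<and> x > 0} - {\<mu>}" and fT: "finite T"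
      and sT: "(\<Sum>x\<in>T. of_rat (c x) * x) = 0"
    have TF: "T \<subseteq> F" and muT: "\<mu> \<notin> T" using T sub by auto
    define d where "d x = (if x \<in> T then c x else 0)" for x
    have "(\<Sum>x\<in>F. of_rat (d x) * x) = (\<Sum>x\<in>F. if x \<in> T then of_rat (c x) * x else 0)"
      by (rule sum.cong) (auto simp: d_def)
    also have "\<dots> = (\<Sum>x\<in>F \<inter> T. of_rat (c x) * x)"
      by (rule sum.inter_restrict[symmetric]) (simp add: F_def)
    also have "F \<inter> T = T" using TF by auto
    finally have "(\<Sum>x\<in>F. of_rat (d x) * x) = 0" using sT by simp
    then have "of_rat (d 1) + of_rat (d r2) * r2 + of_rat (d r3) * r3 + of_rat (d s) * s = 0"
      unfolding F_def using ne by (simp add: algebra_simps)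
    then have "of_rat (d 1 - d s) + of_rat (d r2 + d s) * r2 + of_rat (d r3 + d s) * r3 = 0"
      unfolding s_eq by (simp add: algebra_simps of_rat_add of_rat_diff)
    from L[OF l r2(3) r3(3) ne(3) this] have
      dd: "d 1 = d s" "d r2 = - d s" "d r3 = - d s" by auto
    have "d \<mu> = 0" using muT by (simp add: d_def)
    then have ds0: "d s = 0" using muF dd unfolding F_def by auto
    show "\<forall>x\<in>T. c x = 0"
    proof
      fix x assume xT: "x \<in> T"
      then have "x \<in> F" using TF by auto
      then have "d x = 0" using dd ds0 unfolding F_def by auto
      then show "c x = 0" using xT by (simp add: d_def)
    qed
  qed
qed

end
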